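(* Let $K$ be a unital commutative ring, let $A$ be a $K$-algebra, and let $L,M\subseteq A$ be Lie ideals. Then $A[L,M]A\subseteq A[L,M]$. Moreover, if $L_0\subseteq L$ and $M_0\subseteq M$ are subsets and $m,n\in\mathbb{N}$ satisfy $[A,L_0]_1\subseteq \Sigma^n L_0$ and $[A,M_0]_1\subseteq \Sigma^m M_0$, then \[ A\cdot [L_0,M_0]_1\cdot A\subseteq \Sigma^{1+n+m}\big(A\cdot[L_0,M_0]_1\big). \]
   Context: $K$-algebras are associative and not necessarily unital. For $x,y\in A$, $[x,y]=xy-yx$. For subsets $X,Y\subseteq A$: $[X,Y]$ is the additive subgroup generated by all $[x,y]$ ($x\in X,y\in Y$); $XY$ is the additive subgroup generated by all $xy$ ($x\in X,y\in Y$), and $XYZ=(XY)Z$; $[X,Y]_1=\{[x,y]: x\in X,y\in Y\}$ is the set of commutators; $X\cdot Y=\{xy:x\in X,y\in Y\}$ is the set of products (and $X\cdot Y\cdot Z$ the set of triple products); $\Sigma^n X=\{x_1+\dots+x_n: x_i\in X\}$. A Lie ideal of $A$ is a $K$-linear subspace $L$ with $[A,L]\subseteq L$. *)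

theory Defs
  imports Main
begin

definition is_K_algebra :: "('k::comm_ring_1 \<Rightarrow> 'a::ring \<Rightarrow> 'a) \<Rightarrow> bool" where
  "is_K_algebra smult \<longleftrightarrow>
     (\<forall>k x y. smult k (x + y) = smult k x + smult k y) \<and>
     (\<forall>k l x. smult (k + l) x = smult k x + smult l x) \<and>
     (\<forall>k l x. smult (k * l) x = smult k (smult l x)) \<and>
     (\<forall>x. smult 1 x = x) \<and>
     (\<forall>k x y. smult k (x * y) = smult k x * y) \<and>
     (\<forall>k x y. smult k (x * y) = x * smult k y)"

definition lie_br :: "'a::ring \<Rightarrow> 'a \<Rightarrow> 'a" where
  "lie_br x y = x * y - y * x"

inductive_set addgen :: "'a::ab_group_add set \<Rightarrow> 'a set" for X where
  base: "x \<in> X \<Longrightarrow> x \<in> addgen X"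
| zero: "0 \<in> addgen X"
| add: "x \<in> addgen X \<Longrightarrow> y \<in> addgen X \<Longrightarrow> x + y \<in> addgen X"
| neg: "x \<in> addgen X \<Longrightarrow> - x \<in> addgen X"

text \<open>[X,Y]: additive subgroup generated by commutators.\<close>
definition comm_grp :: "'a::ring set \<Rightarrow> 'a set \<Rightarrow> 'a set" where
  "comm_grp X Y = addgen {lie_br x y | x y. x \<in> X \<and> y \<in> Y}"

text \<open>XY: additive subgroup generated by products.\<close>
definition prod_grp :: "'a::ring set \<Rightarrow> 'a set \<Rightarrow> 'a set" where
  "prod_grp X Y = addgen {x * y | x y. x \<in> X \<and> y \<in> Y}"

text \<open>[X,Y]_1: set of commutators.\<close>
definition comm_set :: "'a::ring set \<Rightarrow> 'a set \<Rightarrow> 'a set" where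
  "comm_set X Y = {lie_br x y | x y. x \<in> X \<and> y \<in> Y}"

text \<open>X . Y: set of products.\<close>
definition prod_set :: "'a::ring set \<Rightarrow> 'a set \<Rightarrow> 'a set" where
  "prod_set X Y = {x * y | x y. x \<in> X \<and> y \<in> Y}"

definition prod3_set :: "'a::ring set \<Rightarrow> 'a set \<Rightarrow> 'a set \<Rightarrow> 'a set" where
  "prod3_set X Y Z = {x * y * z | x y z. x \<in> X \<and> y \<in> Y \<and> z \<in> Z}"

text \<open>Sigma^n X: sums of exactly n elements of X (Sigma^0 X = {0}).\<close>
definition sigma_n :: "nat \<Rightarrow> 'a::monoid_add set \<Rightarrow> 'a set" where
  "sigma_n n X = {sum_list xs | xs. length xs = n \<and> set xs \<subseteq> X}"

definition lie_ideal :: "('k::comm_ring_1 \<Rightarrow> 'a::ring \<Rightarrow> 'a) \<Rightarrow> 'a set \<Rightarrow> bool" where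
  "lie_ideal smult L \<longleftrightarrow>
     0 \<in> L \<and> (\<forall>x\<in>L. \<forall>y\<in>L. x + y \<in> L) \<and> (\<forall>k. \<forall>x\<in>L. smult k x \<in> L) \<and>
     (\<forall>a x. x \<in> L \<longrightarrow> lie_br a x \<in> L)"

end

theory Submission
  imports Defs
begin

lemma key_id:
  fixes a b l m :: "'a::ring"
  shows "a * lie_br l m * b = (a*b) * lie_br l m + a * lie_br l (lie_br (-b) m)
           + a * lie_br (lie_br (-b) l) m"
  by (simp add: lie_br_def algebra_simps)

lemma addgen_sub:
  assumes "X \<subseteq> Y" "0 \<in> Y" "\<And>x y. x \<in> Y \<Longrightarrow> y \<in> Y \<Longrightarrow> x + y \<in> Y"
    "\<And>x. x \<in> Y \<Longrightarrow> - x \<in> Y"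
  shows "addgen X \<subseteq> Y"
proof
  fix x assume "x \<in> addgen X" then show "x \<in> Y"
    by induct (use assms in auto)
qed

lemma part1:
  fixes L M :: "'a::ring set"
  assumes L: "\<And>a x. x \<in> L \<Longrightarrow> lie_br a x \<in> L"
    and M: "\<And>a x. x \<in> M \<Longrightarrow> lie_br a x \<in> M"
  shows "prod_grp (prod_grp UNIV (comm_grp L M)) UNIV \<subseteq> prod_grp UNIV (comm_grp L M)"
proof -
  let ?C = "comm_grp L M"
  let ?P = "prod_grp UNIV ?C"
  have Pb: "x * c \<in> ?P" if "c \<in> ?C" for x c
    using that unfolding prod_grp_def by (auto intro: addgen.base)
  have P0: "0 \<in> ?P" and Padd: "\<And>x y. x \<in> ?P \<Longrightarrow> y \<in> ?P \<Longrightarrow> x + y \<in> ?P"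
    and Pneg: "\<And>x. x \<in> ?P \<Longrightarrow> - x \<in> ?P"
    unfolding prod_grp_def by (auto intro: addgen.intros)
  have brC: "lie_br l m \<in> ?C" if "l \<in> L" "m \<in> M" for l m
    using that unfolding comm_grp_def by (auto intro: addgen.base)
  have step1: "\<forall>a b. a * c * b \<in> ?P" if "c \<in> ?C" for c
    using that[unfolded comm_grp_def]
  proof induct
    case (base x)
    then obtain l m where lm: "x = lie_br l m" "l \<in> L" "m \<in> M" by auto
    show ?case
    proof (intro allI)
      fix a b
      have 1: "lie_br l (lie_br (-b) m) \<in> ?C" using brC lm M by blast
      have 2: "lie_br (lie_br (-b) l) m \<in> ?C" using brC lm L by blast
      have "a * lie_br l m * b \<in> ?P"
      proof -
        have i: "(a*b) * lie_br l m \<in> ?P" by (rule Pb) (rule brC[OF lm(2,3)])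
        have ii: "a * lie_br l (lie_br (-b) m) \<in> ?P" by (rule Pb) (rule 1)
        have iii: "a * lie_br (lie_br (-b) l) m \<in> ?P" by (rule Pb) (rule 2)
        show ?thesis by (subst key_id, rule Padd[OF Padd[OF i ii] iii])
      qed
      then show "a * x * b \<in> ?P" using lm(1) by simp
    qed
  next
    case zero then show ?case using P0 by simp
  next
    case (add x y) then show ?case using Padd by (simp add: algebra_simps)
  next
    case (neg x) then show ?case using Pneg by simp
  qed
  have step2: "\<forall>b. y * b \<in> ?P" if "y \<in> addgen {x * c |x c. x \<in> UNIV \<and> c \<in> ?C}" for y
    using that
  proof induct
    case (base x) then show ?case using step1 by auto
  next
    case zero then show ?case using P0 by simp
  next
    case (add x y) then show ?case using Padd by (simp add: algebra_simps)
  next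
    case (neg x) then show ?case using Pneg by simp
  qed
  show ?thesis
    unfolding prod_grp_def[of "prod_grp UNIV ?C"]
    apply (rule addgen_sub)
    using step2 P0 Padd Pneg unfolding prod_grp_def[of UNIV ?C] by auto
qed

lemma lie_sum_left: "lie_br (sum_list ls) m = sum_list (map (\<lambda>x. lie_br x m) ls)"
  by (induct ls) (auto simp: lie_br_def algebra_simps)

lemma lie_sum_right: "lie_br l (sum_list ms) = sum_list (map (\<lambda>x. lie_br l x) ms)"
  by (induct ms) (auto simp: lie_br_def algebra_simps)

lemma mult_sum_left: "(a::'a::ring) * sum_list xs = sum_list (map (\<lambda>x. a * x) xs)"
  by (induct xs) (auto simp: algebra_simps)

lemma lie_neg: "lie_br l (-x) = - lie_br l x" "lie_br (-x) m = - lie_br x m"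
  by (auto simp: lie_br_def)

lemma minus_sum: "sum_list (map (\<lambda>x. - f x) xs) = - sum_list (map f xs :: 'a::ab_group_add list)"
  by (induct xs) (auto simp: algebra_simps)

lemma neg_sum: "sum_list (map (\<lambda>x. (-a) * f x) xs) = - sum_list (map (\<lambda>x. (a::'a::ring) * f x) xs)"
  by (induct xs) auto

lemma part2:
  fixes L0 M0 :: "'a::ring set"
  assumes hL: "comm_set UNIV L0 \<subseteq> sigma_n n L0"
    and hM: "comm_set UNIV M0 \<subseteq> sigma_n m M0"
  shows "prod3_set UNIV (comm_set L0 M0) UNIV
             \<subseteq> sigma_n (1 + n + m) (prod_set UNIV (comm_set L0 M0))"
proof
  fix z assume "z \<in> prod3_set UNIV (comm_set L0 M0) UNIV"
  then obtain a b l mm where z: "z = a * lie_br l mm * b" and l: "l \<in> L0" and mm: "mm \<in> M0"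
    unfolding prod3_set_def comm_set_def by auto
  have "lie_br b l \<in> sigma_n n L0" using hL l unfolding comm_set_def by auto
  then obtain ls where ls: "lie_br b l = sum_list ls" "length ls = n" "set ls \<subseteq> L0"
    unfolding sigma_n_def by auto
  have "lie_br b mm \<in> sigma_n m M0" using hM mm unfolding comm_set_def by auto
  then obtain ms where ms: "lie_br b mm = sum_list ms" "length ms = m" "set ms \<subseteq> M0"
    unfolding sigma_n_def by auto
  have nb: "lie_br (-b) x = - lie_br b x" for x by (simp add: lie_br_def)
  define xs where "xs = [(a*b) * lie_br l mm] @ map (\<lambda>x. (-a) * lie_br l x) ms
      @ map (\<lambda>x. (-a) * lie_br x mm) ls"
  have "z = sum_list xs"
    unfolding z key_id xs_def nb ls(1) ms(1)
    by (simp add: lie_sum_left lie_sum_right mult_sum_left neg_sum lie_neg minus_sum o_def)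
  moreover have "length xs = 1 + n + m" using ls ms by (simp add: xs_def)
  moreover have "set xs \<subseteq> prod_set UNIV (comm_set L0 M0)"
    using ls ms l mm unfolding xs_def prod_set_def comm_set_def by auto (metis minus_mult_left subsetD)+
  ultimately show "z \<in> sigma_n (1 + n + m) (prod_set UNIV (comm_set L0 M0))"
    unfolding sigma_n_def by blast
qed

theorem lemma3p1:
  fixes smult :: "'k::comm_ring_1 \<Rightarrow> 'a::ring \<Rightarrow> 'a"
    and L M :: "'a set"
  assumes alg: "is_K_algebra smult"
    and L: "lie_ideal smult L" and M: "lie_ideal smult M"
  shows "prod_grp (prod_grp UNIV (comm_grp L M)) UNIV \<subseteq> prod_grp UNIV (comm_grp L M) \<and>
         (\<forall>L0 M0 (m::nat) (n::nat).
           L0 \<subseteq> L \<longrightarrow> M0 \<subseteq> M \<longrightarrow>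
           comm_set UNIV L0 \<subseteq> sigma_n n L0 \<longrightarrow>
           comm_set UNIV M0 \<subseteq> sigma_n m M0 \<longrightarrow>
           prod3_set UNIV (comm_set L0 M0) UNIV
             \<subseteq> sigma_n (1 + n + m) (prod_set UNIV (comm_set L0 M0)))"
proof (intro conjI allI impI)
  show "prod_grp (prod_grp UNIV (comm_grp L M)) UNIV \<subseteq> prod_grp UNIV (comm_grp L M)"
    by (rule part1) (use L M in \<open>auto simp: lie_ideal_def\<close>)
next
  fix L0 M0 :: "'a set" and m n :: nat
  assume "comm_set UNIV L0 \<subseteq> sigma_n n L0" "comm_set UNIV M0 \<subseteq> sigma_n m M0"
  then show "prod3_set UNIV (comm_set L0 M0) UNIV
             \<subseteq> sigma_n (1 + n + m) (prod_set UNIV (comm_set L0 M0))"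
    by (rule part2)
qed

end
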